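(* Let $G$ be a connected $4$-regular graph such that for every vertex $v$, the subgraph of $G$ induced by the neighbors of $v$ is isomorphic either to the cycle $C_4$ or to the path $P_4$ on $4$ vertices. Then $G$ is isomorphic to the triangular cycle $TC_n$ for some $n\ge6$.
   Context: The triangular cycle $TC_n$ is the graph with vertex set $[n]=\{1,\dots,n\}$ in which $i\ne j$ are adjacent iff $i-j\pmod n\in\{n-2,n-1,1,2\}$. *)

theory Defs
  imports Main
begin

definition finite_simple_graph :: "'a set \<Rightarrow> ('a \<Rightarrow> 'a \<Rightarrow> bool) \<Rightarrow> bool" where
  "finite_simple_graph V E \<longleftrightarrow> finite V \<and>
     (\<forall>x y. E x y \<longrightarrow> x \<in> V \<and> y \<in> V) \<and>
     (\<forall>x y. E x y \<longrightarrow> E y x) \<and> (\<forall>x. \<not> E x x)"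

definition neighbours :: "'a set \<Rightarrow> ('a \<Rightarrow> 'a \<Rightarrow> bool) \<Rightarrow> 'a \<Rightarrow> 'a set" where
  "neighbours V E v = {u \<in> V. E v u}"

definition regular :: "nat \<Rightarrow> 'a set \<Rightarrow> ('a \<Rightarrow> 'a \<Rightarrow> bool) \<Rightarrow> bool" where
  "regular k V E \<longleftrightarrow> (\<forall>v\<in>V. card (neighbours V E v) = k)"

definition connected_graph :: "'a set \<Rightarrow> ('a \<Rightarrow> 'a \<Rightarrow> bool) \<Rightarrow> bool" where
  "connected_graph V E \<longleftrightarrow> V \<noteq> {} \<and>
     (\<forall>u\<in>V. \<forall>v\<in>V. (\<lambda>x y. x \<in> V \<and> y \<in> V \<and> E x y)\<^sup>*\<^sup>* u v)"

definition graph_iso :: "'a set \<Rightarrow> ('a \<Rightarrow> 'a \<Rightarrow> bool) \<Rightarrow> 'b set \<Rightarrow> ('b \<Rightarrow> 'b \<Rightarrow> bool) \<Rightarrow> bool" where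
  "graph_iso V1 E1 V2 E2 \<longleftrightarrow>
     (\<exists>f. bij_betw f V1 V2 \<and> (\<forall>x\<in>V1. \<forall>y\<in>V1. E1 x y \<longleftrightarrow> E2 (f x) (f y)))"

definition induced_adj :: "('a \<Rightarrow> 'a \<Rightarrow> bool) \<Rightarrow> 'a set \<Rightarrow> 'a \<Rightarrow> 'a \<Rightarrow> bool" where
  "induced_adj E S x y \<longleftrightarrow> x \<in> S \<and> y \<in> S \<and> E x y"

definition C4_adj :: "nat \<Rightarrow> nat \<Rightarrow> bool" where
  "C4_adj i j \<longleftrightarrow> i < 4 \<and> j < 4 \<and> ((i + 1) mod 4 = j \<or> (j + 1) mod 4 = i)"

definition P4_adj :: "nat \<Rightarrow> nat \<Rightarrow> bool" where
  "P4_adj i j \<longleftrightarrow> i < 4 \<and> j < 4 \<and> (i + 1 = j \<or> j + 1 = i)"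

definition TC_adj :: "nat \<Rightarrow> nat \<Rightarrow> nat \<Rightarrow> bool" where
  "TC_adj n i j \<longleftrightarrow> i \<in> {1..n} \<and> j \<in> {1..n} \<and> i \<noteq> j \<and>
     (int i - int j) mod int n \<in> {int n - 2, int n - 1, 1, 2}"

end

theory Submission imports Defs begin

lemma iso_inv:
  assumes "graph_iso S R A Q"
  shows "\<exists>p. bij_betw p A S \<and> (\<forall>i\<in>A. \<forall>j\<in>A. Q i j \<longleftrightarrow> R (p i) (p j))"
proof -
  obtain f where f: "bij_betw f S A" "\<forall>x\<in>S. \<forall>y\<in>S. R x y \<longleftrightarrow> Q (f x) (f y)"
    using assms unfolding graph_iso_def by blast
  let ?p = "inv_into S f"
  have b: "bij_betw ?p A S" using f(1) by (rule bij_betw_inv_into)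
  have "\<forall>i\<in>A. ?p i \<in> S \<and> f (?p i) = i"
    using f(1) by (metis bij_betw_def bij_betw_imp_surj_on f_inv_into_f inv_into_into)
  then show ?thesis using b f(2) by metis
qed

lemma iso_from:
  assumes "bij_betw p A S" "\<forall>i\<in>A. \<forall>j\<in>A. Q i j \<longleftrightarrow> R (p i) (p j)"
  shows "graph_iso S R A Q"
proof -
  let ?f = "inv_into A p"
  have b: "bij_betw ?f S A" using assms(1) by (rule bij_betw_inv_into)
  have "\<forall>x\<in>S. ?f x \<in> A \<and> p (?f x) = x"
    using assms(1) by (metis bij_betw_def bij_betw_imp_surj_on f_inv_into_f inv_into_into)
  then show ?thesis unfolding graph_iso_def using b assms(2) by metis
qed

lemma tc6: "\<forall>i\<in>{1,2,3,4,5,6::nat}. \<forall>j\<in>{1,2,3,4,5,6}. TC_adj 6 i j \<longleftrightarrow> (i \<noteq> j \<and> i + 3 \<noteq> j \<and> j + 3 \<noteq> i)"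
  by (simp add: TC_adj_def)

lemma mod2: fixes a P :: nat assumes "a < 2*P" shows "a mod P = (if a < P then a else a - P)"
proof (cases "a < P")
  case True then show ?thesis by simp
next
  case False
  then have "a - P < P" "a = (a - P) + P" using assms by auto
  then show ?thesis using False by (metis mod_add_self2 mod_less)
qed

lemma tc_nat: fixes P i j :: nat assumes "6 \<le> P" "1 \<le> i" "i \<le> P" "1 \<le> j" "j \<le> P"
  shows "TC_adj P i j \<longleftrightarrow> i \<noteq> j \<and> (i + P - j) mod P \<in> {P - 2, P - 1, 1, 2}"
proof -
  have a: "int i - int j + int P = int (i + P - j)" using assms by auto
  have "(int i - int j) mod int P = int (i + P - j) mod int P"
    using a by (metis mod_add_self2)
  also have "\<dots> = int ((i + P - j) mod P)" by (simp add: zmod_int)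
  finally have m: "(int i - int j) mod int P = int ((i + P - j) mod P)" .
  have "int ((i + P - j) mod P) \<in> {int P - 2, int P - 1, 1, 2} \<longleftrightarrow> (i + P - j) mod P \<in> {P - 2, P - 1, 1, 2}"
    using assms by auto
  then show ?thesis unfolding TC_adj_def using m assms by auto
qed

lemma mod_cancel: fixes a q t P :: nat shows "(a+q) mod P = (a+t) mod P \<longleftrightarrow> q mod P = t mod P"
proof -
  have "(a+q) mod P = (a+t) mod P \<longleftrightarrow> int ((a+q) mod P) = int ((a+t) mod P)" by linarith
  also have "\<dots> \<longleftrightarrow> (int a + int q) mod int P = (int a + int t) mod int P" by (simp add: zmod_int)
  also have "\<dots> \<longleftrightarrow> int P dvd (int q - int t)" by (simp add: mod_eq_dvd_iff)
  also have "\<dots> \<longleftrightarrow> int q mod int P = int t mod int P" by (simp add: mod_eq_dvd_iff)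
  also have "\<dots> \<longleftrightarrow> q mod P = t mod P" by (metis of_nat_eq_iff zmod_int)
  finally show ?thesis .
qed

lemma tvals: fixes P :: nat assumes "6 \<le> P"
  shows "(P-2) mod P = P - 2" "(P-1) mod P = P - 1" "(P+1) mod P = 1" "(P+2) mod P = 2"
proof -
  show "(P-2) mod P = P - 2" "(P-1) mod P = P - 1" using assms by simp_all
  have "(P+1) mod P = 1 mod P" "(P+2) mod P = 2 mod P" by (rule mod_add_self1)+
  then show "(P+1) mod P = 1" "(P+2) mod P = 2" using assms by simp_all
qed

locale G =
  fixes V :: "'a set" and E :: "'a \<Rightarrow> 'a \<Rightarrow> bool"
  assumes fsg: "finite_simple_graph V E"
    and conn: "connected_graph V E"
    and reg: "regular 4 V E"
    and loc: "\<forall>v\<in>V. graph_iso (neighbours V E v) (induced_adj E (neighbours V E v)) {0..<4} C4_adj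
             \<or> graph_iso (neighbours V E v) (induced_adj E (neighbours V E v)) {0..<4} P4_adj"
begin

abbreviation "N \<equiv> neighbours V E"

lemma EV: "E x y \<Longrightarrow> x \<in> V \<and> y \<in> V" using fsg unfolding finite_simple_graph_def by blast
lemma Esym: "E x y \<Longrightarrow> E y x" using fsg unfolding finite_simple_graph_def by blast
lemma Esym_iff: "E x y \<longleftrightarrow> E y x" using Esym by blast
lemma Eirr: "\<not> E x x" using fsg unfolding finite_simple_graph_def by blast
lemma finV: "finite V" using fsg unfolding finite_simple_graph_def by blast
lemma N_iff: "y \<in> N x \<longleftrightarrow> E x y" unfolding neighbours_def using EV by blast
lemma cardN: "v \<in> V \<Longrightarrow> card (N v) = 4" using reg unfolding regular_def by blast

definition lp :: "'a \<Rightarrow> 'a \<Rightarrow> 'a \<Rightarrow> 'a \<Rightarrow> 'a \<Rightarrow> bool" where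
  "lp u p1 p2 p3 p4 \<longleftrightarrow> distinct [p1,p2,p3,p4] \<and> N u = {p1,p2,p3,p4} \<and> E p1 p2 \<and> E p2 p3 \<and> E p3 p4
     \<and> \<not> E p1 p3 \<and> \<not> E p2 p4"

lemma lp_rev: "lp u p1 p2 p3 p4 \<Longrightarrow> lp u p4 p3 p2 p1"
  unfolding lp_def using Esym by auto

lemma link_gen:
  fixes R :: "nat \<Rightarrow> nat \<Rightarrow> bool"
  assumes "graph_iso (N v) (induced_adj E (N v)) {0..<4} R"
  shows "\<exists>p. N v = {p 0, p 1, p 2, p 3} \<and> distinct [p 0, p 1, p 2, p 3] \<and> (\<forall>i<4. \<forall>j<4. E (p i) (p j) \<longleftrightarrow> R i j)"
proof -
  obtain p where p: "bij_betw p {0..<4} (N v)" "\<forall>i\<in>{0..<4}. \<forall>j\<in>{0..<4}. R i j \<longleftrightarrow> induced_adj E (N v) (p i) (p j)"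
    using iso_inv[OF assms] by blast
  have im: "N v = {p 0, p 1, p 2, p 3}" using p(1) unfolding bij_betw_def
    by (auto simp: atLeast0LessThan lessThan_nat_numeral)
  have inj: "inj_on p {0..<4}" using p(1) bij_betw_def by blast
  have ne: "\<And>i j. i < 4 \<Longrightarrow> j < 4 \<Longrightarrow> i \<noteq> j \<Longrightarrow> p i \<noteq> p j"
    using inj unfolding inj_on_def by auto
  have d: "distinct [p 0, p 1, p 2, p 3]"
    using ne[of 0 1] ne[of 0 2] ne[of 0 3] ne[of 1 2] ne[of 1 3] ne[of 2 3] by auto
  have e: "\<forall>i<4. \<forall>j<4. E (p i) (p j) \<longleftrightarrow> R i j"
    using p(2) bij_betw_apply[OF p(1)] unfolding induced_adj_def by auto
  show ?thesis using d im e by blast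
qed

lemma link:
  assumes "v \<in> V"
  shows "\<exists>p1 p2 p3 p4. lp v p1 p2 p3 p4 \<and> (E p1 p4 \<longleftrightarrow> graph_iso (N v) (induced_adj E (N v)) {0..<4} C4_adj)"
proof (cases "graph_iso (N v) (induced_adj E (N v)) {0..<4} C4_adj")
  case True
  then obtain p where p: "N v = {p 0, p 1, p 2, p 3}" "distinct [p 0, p 1, p 2, p 3]" "\<forall>i<4. \<forall>j<4. E (p i) (p j) \<longleftrightarrow> C4_adj i j"
    using link_gen by blast
  have "E (p 0) (p 1)" "E (p 1) (p 2)" "E (p 2) (p 3)" "\<not> E (p 0) (p 2)" "\<not> E (p 1) (p 3)" "E (p 0) (p 3)"
    using p(3) by (simp_all add: C4_adj_def)
  then show ?thesis using True p(1,2) unfolding lp_def by blast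
next
  case False
  then have "graph_iso (N v) (induced_adj E (N v)) {0..<4} P4_adj" using loc assms by blast
  then obtain p where p: "N v = {p 0, p 1, p 2, p 3}" "distinct [p 0, p 1, p 2, p 3]" "\<forall>i<4. \<forall>j<4. E (p i) (p j) \<longleftrightarrow> P4_adj i j"
    using link_gen by blast
  have "E (p 0) (p 1)" "E (p 1) (p 2)" "E (p 2) (p 3)" "\<not> E (p 0) (p 2)" "\<not> E (p 1) (p 3)" "\<not> E (p 0) (p 3)"
    using p(3) by (simp_all add: P4_adj_def)
  then show ?thesis using False p(1,2) unfolding lp_def by blast
qed


lemma D1:
  assumes "lp u p1 p2 p3 p4" "q \<in> N u" shows "\<exists>z\<in>N u. E q z"
  using assms unfolding lp_def by (auto simp: Esym_iff)

lemma D2: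
  assumes "lp u p1 p2 p3 p4" "q \<in> N u" "r \<in> N u" "E q r"
    "N u \<inter> N q = {r}" "N u \<inter> N r = {q}"
  shows False
proof -
  have d: "distinct [p1,p2,p3,p4]" and Nu: "N u = {p1,p2,p3,p4}" and e: "E p1 p2" "E p2 p3" "E p3 p4" "\<not> E p1 p3" "\<not> E p2 p4"
    using assms(1) unfolding lp_def by auto
  have m2: "p1 \<in> N u \<inter> N p2" "p3 \<in> N u \<inter> N p2" using Nu e by (auto simp: N_iff Esym_iff)
  have m3: "p2 \<in> N u \<inter> N p3" "p4 \<in> N u \<inter> N p3" using Nu e by (auto simp: N_iff Esym_iff)
  have n2: "q \<noteq> p2 \<and> r \<noteq> p2"
  proof (rule ccontr)
    assume "\<not> (q \<noteq> p2 \<and> r \<noteq> p2)"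
    then have "p1 \<in> {r} \<and> p3 \<in> {r} \<or> p1 \<in> {q} \<and> p3 \<in> {q}" using m2 assms(5,6) by auto
    then show False using d by auto
  qed
  have n3: "q \<noteq> p3 \<and> r \<noteq> p3"
  proof (rule ccontr)
    assume "\<not> (q \<noteq> p3 \<and> r \<noteq> p3)"
    then have "p2 \<in> {r} \<and> p4 \<in> {r} \<or> p2 \<in> {q} \<and> p4 \<in> {q}" using m3 assms(5,6) by auto
    then show False using d by auto
  qed
  have qr: "q \<noteq> r" using assms(4) Eirr by auto
  have "q \<in> {p1,p4}" "r \<in> {p1,p4}" using n2 n3 assms(2,3) Nu by auto
  then have "E p1 p4" using qr assms(4) by (auto simp: Esym_iff)
  then have "p2 \<in> N u \<inter> N p1" "p4 \<in> N u \<inter> N p1" using Nu e by (auto simp: N_iff Esym_iff)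
  moreover have "p1 = q \<or> p1 = r" using \<open>q \<in> {p1,p4}\<close> \<open>r \<in> {p1,p4}\<close> qr by auto
  ultimately have "p2 \<in> {r} \<and> p4 \<in> {r} \<or> p2 \<in> {q} \<and> p4 \<in> {q}" using assms(5,6) by auto
  then show False using d by auto
qed

lemma D1':
  assumes "u \<in> V" "q \<in> N u" shows "\<exists>z\<in>N u. E q z"
  using link[OF assms(1)] D1 assms(2) by blast

lemma D2':
  assumes "u \<in> V" "q \<in> N u" "r \<in> N u" "E q r"
    "N u \<inter> N q = {r}" "N u \<inter> N r = {q}"
  shows False
  using link[OF assms(1)] D2 assms(2-6) by blast

lemma fourth:
  assumes "p \<in> V" "v \<in> N p" "q1 \<in> N p" "q2 \<in> N p" "distinct [v,q1,q2]"
  shows "\<exists>x. N p = {v,q1,q2,x} \<and> x \<notin> {v,q1,q2}"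
proof -
  have f: "finite (N p)" using finV unfolding neighbours_def by auto
  have c3: "card {v,q1,q2} = 3" using distinct_card[OF assms(5)] by simp
  have sub: "{v,q1,q2} \<subseteq> N p" using assms(2-4) by blast
  have "card (N p - {v,q1,q2}) = card (N p) - card {v,q1,q2}"
    by (rule card_Diff_subset[OF _ sub]) simp
  then have "card (N p - {v,q1,q2}) = 1" using c3 cardN[OF assms(1)] by presburger
  then obtain x where x: "N p - {v,q1,q2} = {x}" by (meson card_1_singletonE)
  then have "N p = {v,q1,q2,x}" using sub by blast
  moreover have "x \<notin> {v,q1,q2}" using x by blast
  ultimately show ?thesis by blast
qed

lemma closure:
  assumes "x \<in> S" "\<forall>y\<in>S. N y \<subseteq> S" "u \<in> V" "x \<in> V"
  shows "u \<in> S"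
proof -
  have "(\<lambda>x y. x \<in> V \<and> y \<in> V \<and> E x y)\<^sup>*\<^sup>* x u" using conn assms(3,4) unfolding connected_graph_def by blast
  then show ?thesis
  proof (induction rule: rtranclp_induct)
    case base then show ?case using assms(1) by simp
  next
    case (step y z) then show ?case using assms(2) N_iff by blast
  qed
qed

lemma pair_contra:
  assumes "N a = {v,b,d,w}" "N b = {v,a,c,w}" "N c = {v,b,d,xc}" "N d = {v,a,c,xd}"
    "w \<noteq> xc" "w \<noteq> xd" "w \<notin> {v,a,b,c,d}" "E a b" "\<not> E v w" "w \<in> V"
  shows False
proof -
  have nc: "\<not> E w c" using assms(3,5,7) Esym N_iff by blast
  have nd: "\<not> E w d" using assms(4,6,7) Esym N_iff by blast
  have "w \<in> N a" "w \<in> N b" using assms(1,2) by auto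
  then have wa: "E w a" "E w b" by (auto simp: N_iff Esym_iff)
  have "N w \<inter> N a = {b}"
  proof
    show "N w \<inter> N a \<subseteq> {b}"
    proof
      fix y assume y: "y \<in> N w \<inter> N a"
      then have "E w y" "y \<in> {v,b,d,w}" using assms(1) N_iff by auto
      then show "y \<in> {b}" using nd assms(9) Eirr by (auto simp: Esym_iff)
    qed
    show "{b} \<subseteq> N w \<inter> N a" using wa assms(1) N_iff by auto
  qed
  moreover have "N w \<inter> N b = {a}"
  proof
    show "N w \<inter> N b \<subseteq> {a}"
    proof
      fix y assume y: "y \<in> N w \<inter> N b"
      then have "E w y" "y \<in> {v,a,c,w}" using assms(2) N_iff by auto
      then show "y \<in> {a}" using nc assms(9) Eirr by (auto simp: Esym_iff)
    qed
    show "{a} \<subseteq> N w \<inter> N b" using wa assms(2) N_iff by auto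
  qed
  moreover have "a \<in> N w" "b \<in> N w" using wa N_iff by auto
  ultimately show False using D2'[OF assms(10), of a b] assms(8) by blast
qed


lemma side:
  assumes "p \<in> V" "N p = {v,q1,q2,x}" "\<not> E v x"
  shows "E x q1 \<or> E x q2"
proof -
  have "x \<in> N p" using assms(2) by blast
  then obtain z where z: "z \<in> N p" "E x z" using D1'[OF assms(1)] by blast
  have "z \<noteq> v" using z(2) assms(3) Esym by blast
  moreover have "z \<noteq> x" using z(2) Eirr by blast
  ultimately show ?thesis using z assms(2) by blast
qed

lemma eqlem:
  assumes "E x q" "N q = {v,r1,r2,y}" "x \<notin> {v,r1,r2}"
  shows "x = y"
proof -
  have "x \<in> N q" using assms(1) Esym N_iff by blast
  then show ?thesis using assms(2,3) by blast
qed

lemma TC6_iso: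
  assumes "V = {v,a,b,c,d,w}" "distinct [v,a,b,w,c,d]"
    "N v = {a,b,c,d}" "N a = {v,b,d,w}" "N b = {v,a,c,w}" "N c = {v,b,d,w}" "N d = {v,a,c,w}" "N w = {a,b,c,d}"
  shows "graph_iso V E {1..6} (TC_adj 6)"
proof -
  define g where "g = (\<lambda>i. [v,a,b,w,c,d] ! (i - 1))"
  have s6: "{1..6::nat} = {1,2,3,4,5,6}" by auto
  have gv: "g 1 = v" "g 2 = a" "g 3 = b" "g 4 = w" "g 5 = c" "g 6 = d" "g (Suc 0) = v" unfolding g_def by simp_all
  have im: "g ` {1..6} = V" unfolding s6 using gv assms(1) by auto
  have inj: "inj_on g {1..6}" unfolding s6 inj_on_def using assms(2) by (auto simp: gv)
  have EN: "\<And>x y. E x y \<longleftrightarrow> y \<in> N x" using N_iff by blast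
  have "\<forall>i\<in>{1,2,3,4,5,6::nat}. \<forall>j\<in>{1,2,3,4,5,6}. (i \<noteq> j \<and> i + 3 \<noteq> j \<and> j + 3 \<noteq> i) \<longleftrightarrow> E (g i) (g j)"
    using assms(2) by (simp add: gv EN assms(3-8)) blast
  then have "\<forall>i\<in>{1..6}. \<forall>j\<in>{1..6}. TC_adj 6 i j \<longleftrightarrow> E (g i) (g j)"
    unfolding s6 using tc6 by simp
  then show ?thesis using iso_from[of g "{1..6}" V] im inj unfolding bij_betw_def by blast
qed


lemma octa:
  assumes v: "v \<in> V" and l: "lp v a b c d" and ad: "E a d"
  shows "graph_iso V E {1..6} (TC_adj 6)"
proof -
  have dist: "distinct [a,b,c,d]" and Nv: "N v = {a,b,c,d}" and e: "E a b" "E b c" "E c d" "\<not> E a c" "\<not> E b d"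
    using l unfolding lp_def by auto
  have inN: "a \<in> N v" "b \<in> N v" "c \<in> N v" "d \<in> N v" using Nv by auto
  then have Ev: "E v a" "E v b" "E v c" "E v d" using N_iff by auto
  have inV: "a \<in> V" "b \<in> V" "c \<in> V" "d \<in> V" using Ev EV by auto
  have nv: "v \<noteq> a" "v \<noteq> b" "v \<noteq> c" "v \<noteq> d" using Ev Eirr by auto
  have vN: "v \<in> N a" "v \<in> N b" "v \<in> N c" "v \<in> N d" using Ev Esym N_iff by auto
  have eN: "b \<in> N a" "d \<in> N a" "a \<in> N b" "c \<in> N b" "b \<in> N c" "d \<in> N c" "a \<in> N d" "c \<in> N d"
    using e ad Esym N_iff by auto
  obtain xa where Na: "N a = {v,b,d,xa}" "xa \<notin> {v,b,d}"
    using fourth[OF inV(1) vN(1) eN(1) eN(2)] nv dist by auto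
  obtain xb where Nb: "N b = {v,a,c,xb}" "xb \<notin> {v,a,c}"
    using fourth[OF inV(2) vN(2) eN(3) eN(4)] nv dist by auto
  obtain xc where Nc: "N c = {v,b,d,xc}" "xc \<notin> {v,b,d}"
    using fourth[OF inV(3) vN(3) eN(5) eN(6)] nv dist by auto
  obtain xd where Nd: "N d = {v,a,c,xd}" "xd \<notin> {v,a,c}"
    using fourth[OF inV(4) vN(4) eN(7) eN(8)] nv dist by auto
  have xaE: "E a xa" "E b xb" "E c xc" "E d xd" using Na Nb Nc Nd N_iff by auto
  have xa: "xa \<notin> {v,a,b,c,d}" using Na xaE(1) Eirr e(4) by auto
  have xb: "xb \<notin> {v,a,b,c,d}" using Nb xaE(2) Eirr e(5) by auto
  have xc: "xc \<notin> {v,a,b,c,d}" using Nc xaE(3) Eirr e(4) Esym by auto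
  have xd: "xd \<notin> {v,a,b,c,d}" using Nd xaE(4) Eirr e(5) Esym by auto
  have nvx: "\<not> E v xa" "\<not> E v xb" "\<not> E v xc" "\<not> E v xd"
    using xa xb xc xd Nv N_iff by blast+
  have xV: "xa \<in> V" "xb \<in> V" "xc \<in> V" "xd \<in> V" using xaE EV by auto
  have s1: "xa = xb \<or> xa = xd"
    using side[OF inV(1) Na(1) nvx(1)] eqlem[OF _ Nb(1)] eqlem[OF _ Nd(1)] xa by blast
  have s2: "xb = xa \<or> xb = xc"
    using side[OF inV(2) Nb(1) nvx(2)] eqlem[OF _ Na(1)] eqlem[OF _ Nc(1)] xb by blast
  have s3: "xc = xb \<or> xc = xd"
    using side[OF inV(3) Nc(1) nvx(3)] eqlem[OF _ Nb(1)] eqlem[OF _ Nd(1)] xc by blast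
  have s4: "xd = xa \<or> xd = xc"
    using side[OF inV(4) Nd(1) nvx(4)] eqlem[OF _ Na(1)] eqlem[OF _ Nc(1)] xd by blast
  have pab: False if "xa = xb" "xa \<noteq> xc" "xa \<noteq> xd"
    using pair_contra[of a v b d xa c xc xd] Na Nb Nc Nd that xa e nvx xV by auto
  have pbc: False if "xb = xc" "xb \<noteq> xd" "xb \<noteq> xa"
  proof -
    have "N b = {v,c,a,xb}" "N c = {v,b,d,xb}" "N d = {v,c,a,xd}" "N a = {v,d,b,xa}"
      using Na Nb Nc Nd that by auto
    then show False using pair_contra[of b v c a xb d xd xa] that xb e nvx xV by auto
  qed
  have pcd: False if "xc = xd" "xc \<noteq> xa" "xc \<noteq> xb"
  proof -
    have "N c = {v,d,b,xc}" "N d = {v,c,a,xc}" "N a = {v,d,b,xa}" "N b = {v,c,a,xb}"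
      using Na Nb Nc Nd that by auto
    then show False using pair_contra[of c v d b xc a xa xb] that xc e nvx xV by auto
  qed
  have pda: False if "xd = xa" "xd \<noteq> xb" "xd \<noteq> xc"
  proof -
    have "N d = {v,a,c,xd}" "N a = {v,d,b,xd}" "N b = {v,a,c,xb}" "N c = {v,d,b,xc}"
      using Na Nb Nc Nd that by auto
    then show False using pair_contra[of d v a c xd b xb xc] that xd Esym[OF ad] nvx xV by auto
  qed
  have all: "xb = xa" "xc = xa" "xd = xa" using s1 s2 s3 s4 pab pbc pcd pda by metis+
  let ?w = xa
  have sub: "{a,b,c,d} \<subseteq> N ?w" using xaE all Esym N_iff by auto
  have fin: "finite (N ?w)" using finV unfolding neighbours_def by auto
  have c4: "card {a,b,c,d} = 4" using distinct_card[OF dist] by simp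
  have Nw: "N ?w = {a,b,c,d}"
    using card_subset_eq[OF fin sub] c4 cardN[OF xV(1)] by simp
  have Na': "N a = {v,b,d,?w}" "N b = {v,a,c,?w}" "N c = {v,b,d,?w}" "N d = {v,a,c,?w}"
    using Na Nb Nc Nd all by auto
  let ?S = "{v,a,b,c,d,?w}"
  have cl: "\<forall>y\<in>?S. N y \<subseteq> ?S" using Nv Na' Nw by auto
  have "V \<subseteq> ?S" using closure[of v ?S] cl v by blast
  moreover have "?S \<subseteq> V" using v inV xV by auto
  ultimately have VS: "V = ?S" by blast
  have d6: "distinct [v,a,b,?w,c,d]" using dist nv xa by auto
  show ?thesis using TC6_iso[OF VS d6 Nv Na' Nw] .
qed


definition mid :: "'a \<Rightarrow> 'a set" where
  "mid u = {q. \<exists>z1 z2. z1 \<noteq> z2 \<and> E u q \<and> E u z1 \<and> E q z1 \<and> E u z2 \<and> E q z2}"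

lemma mid_sym: "q \<in> mid u \<longleftrightarrow> u \<in> mid q"
  unfolding mid_def using Esym by blast

lemma mid_N: "q \<in> mid u \<Longrightarrow> E u q"
  unfolding mid_def by blast

lemma M1:
  assumes "lp u p1 p2 p3 p4" "\<not> E p1 p4"
  shows "mid u = {p2,p3}"
proof -
  have d: "distinct [p1,p2,p3,p4]" and Nu: "N u = {p1,p2,p3,p4}" and e: "E p1 p2" "E p2 p3" "E p3 p4" "\<not> E p1 p3" "\<not> E p2 p4"
    using assms(1) unfolding lp_def by auto
  have Eu: "E u p1" "E u p2" "E u p3" "E u p4" using Nu N_iff by auto
  have "p2 \<in> mid u" unfolding mid_def
    apply (rule CollectI, rule exI[of _ p1], rule exI[of _ p3]) using d Eu e Esym by auto
  moreover have "p3 \<in> mid u" unfolding mid_def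
    apply (rule CollectI, rule exI[of _ p2], rule exI[of _ p4]) using d Eu e Esym by auto
  moreover have "mid u \<subseteq> {p2,p3}"
  proof
    fix q assume q: "q \<in> mid u"
    then obtain z1 z2 where z: "z1 \<noteq> z2" "E u q" "E u z1" "E q z1" "E u z2" "E q z2"
      unfolding mid_def by blast
    have qN: "q \<in> {p1,p2,p3,p4}" using z(2) Nu N_iff by blast
    have zN: "z1 \<in> {p1,p2,p3,p4}" "z2 \<in> {p1,p2,p3,p4}" using z(3,5) Nu N_iff by blast+
    have "q \<noteq> p1"
    proof
      assume "q = p1"
      then have "z1 = p2" "z2 = p2" using zN z(4,6) e(4) assms(2) Eirr by auto
      then show False using z(1) by simp
    qed
    moreover have "q \<noteq> p4"
    proof
      assume "q = p4"
      then have "z1 = p3" "z2 = p3" using zN z(4,6) e(5) assms(2) Eirr Esym by blast+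
      then show False using z(1) by simp
    qed
    ultimately show "q \<in> {p2,p3}" using qN by blast
  qed
  ultimately show ?thesis by blast
qed

lemma cn_end:
  assumes "lp u p1 p2 p3 p4" "\<not> E p1 p4"
  shows "N u \<inter> N p1 = {p2}"
proof -
  have d: "distinct [p1,p2,p3,p4]" and Nu: "N u = {p1,p2,p3,p4}" and e: "E p1 p2" "E p2 p3" "E p3 p4" "\<not> E p1 p3" "\<not> E p2 p4"
    using assms(1) unfolding lp_def by auto
  show ?thesis
  proof
    show "N u \<inter> N p1 \<subseteq> {p2}"
    proof
      fix z assume "z \<in> N u \<inter> N p1"
      then have "z \<in> {p1,p2,p3,p4}" "E p1 z" using Nu N_iff by auto
      then show "z \<in> {p2}" using e(4) assms(2) Eirr by auto
    qed
    show "{p2} \<subseteq> N u \<inter> N p1" using Nu e(1) N_iff by auto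
  qed
qed

end

locale G2 = G +
  assumes allP: "\<forall>v\<in>V. \<forall>p1 p2 p3 p4. lp v p1 p2 p3 p4 \<longrightarrow> \<not> E p1 p4"
begin

lemma link2: "v \<in> V \<Longrightarrow> \<exists>p1 p2 p3 p4. lp v p1 p2 p3 p4 \<and> \<not> E p1 p4"
  using link allP by blast

lemma mid2:
  assumes "u \<in> V" "x \<in> mid u"
  shows "\<exists>y. mid u = {x,y} \<and> x \<noteq> y"
proof -
  obtain p1 p2 p3 p4 where l: "lp u p1 p2 p3 p4" "\<not> E p1 p4" using link2[OF assms(1)] by blast
  have "mid u = {p2,p3}" "p2 \<noteq> p3" using M1[OF l] l(1) unfolding lp_def by auto
  then show ?thesis using assms(2) by auto
qed

lemma mid_adj:
  assumes "u \<in> V" "x \<in> mid u" "y \<in> mid u" "x \<noteq> y"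
  shows "E x y"
proof -
  obtain p1 p2 p3 p4 where l: "lp u p1 p2 p3 p4" "\<not> E p1 p4" using link2[OF assms(1)] by blast
  have "mid u = {p2,p3}" "E p2 p3" using M1[OF l] l(1) unfolding lp_def by auto
  then show ?thesis using assms(2-4) Esym by auto
qed

lemma end_cn:
  assumes "u \<in> V" "q \<in> N u" "q \<notin> mid u"
  shows "\<exists>z. N u \<inter> N q = {z}"
proof -
  obtain p1 p2 p3 p4 where l: "lp u p1 p2 p3 p4" "\<not> E p1 p4" using link2[OF assms(1)] by blast
  have m: "mid u = {p2,p3}" using M1[OF l] .
  have Nu: "N u = {p1,p2,p3,p4}" using l(1) unfolding lp_def by auto
  have "q = p1 \<or> q = p4" using assms(2,3) m Nu by auto
  moreover have "N u \<inter> N p1 = {p2}" using cn_end[OF l] .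
  moreover have "N u \<inter> N p4 = {p3}" using cn_end[OF lp_rev[OF l(1)]] l(2) Esym by blast
  ultimately show ?thesis by blast
qed

lemma NTh:
  assumes b: "b \<in> V" and l: "lp b x a c y" and ac: "a \<in> mid c"
  shows False
proof -
  have np: "\<not> E x y" using allP b l by blast
  have mb: "mid b = {a,c}" using M1[OF l np] .
  have d: "distinct [x,a,c,y]" and e: "E x a" "E a c" using l unfolding lp_def by auto
  have aV: "a \<in> V" using e EV by blast
  have "b \<in> mid a" using mb mid_sym by blast
  moreover have "c \<in> mid a" using ac mid_sym by blast
  moreover have "b \<noteq> c"
  proof
    assume "b = c" then have "c \<in> mid c" using mb by auto
    then show False using mid_N Eirr by blast
  qed
  ultimately obtain yy where ma: "mid a = {b,c}" using mid2[OF aV] by (metis doubleton_eq_iff insert_iff singletonD)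
  have xNb: "x \<in> N b" "a \<in> N b" using l unfolding lp_def by auto
  have Ebx: "E b x" "E b a" using xNb N_iff by auto
  have xb: "x \<noteq> b" using Ebx Eirr by blast
  have xNa: "x \<in> N a" using e(1) Esym N_iff by blast
  have "x \<notin> mid a" using ma xb d by auto
  then obtain z where z: "N a \<inter> N x = {z}" using end_cn[OF aV xNa] by blast
  have "b \<in> N a \<inter> N x" using Ebx Esym N_iff by blast
  then have cax: "N x \<inter> N a = {b}" using z by (simp add: Int_commute)
  have cbx: "N x \<inter> N b = {a}" using cn_end[OF l np] by blast
  have xV: "x \<in> V" using e EV by blast
  have "a \<in> N x" "b \<in> N x" using e(1) Ebx(1) Esym N_iff by blast+
  then show False using D2'[OF xV _ _ _ cax cbx] Ebx(2) Esym by blast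
qed

lemma NT:
  assumes "b \<in> V" "a \<in> mid b" "c \<in> mid b" "a \<noteq> c" "a \<in> mid c"
  shows False
proof -
  obtain p1 p2 p3 p4 where l: "lp b p1 p2 p3 p4" "\<not> E p1 p4" using link2[OF assms(1)] by blast
  have m: "mid b = {p2,p3}" using M1[OF l] .
  have "(a = p2 \<and> c = p3) \<or> (a = p3 \<and> c = p2)" using m assms(2-4) by auto
  then show False
  proof
    assume "a = p2 \<and> c = p3" then show False using NTh[OF assms(1) l(1)] assms(5) by blast
  next
    assume "a = p3 \<and> c = p2" then show False using NTh[OF assms(1) lp_rev[OF l(1)]] assms(5) by blast
  qed
qed


definition nxt :: "'a \<Rightarrow> 'a \<Rightarrow> 'a" where
  "nxt u v = (SOME w. w \<in> mid v \<and> w \<noteq> u)"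

lemma nxt_prop:
  assumes "v \<in> V" "u \<in> mid v"
  shows "mid v = {u, nxt u v} \<and> u \<noteq> nxt u v"
proof -
  obtain y where y: "mid v = {u,y}" "u \<noteq> y" using mid2[OF assms] by blast
  have "nxt u v \<in> mid v \<and> nxt u v \<noteq> u" unfolding nxt_def
    by (rule someI[of _ y]) (use y in auto)
  then have "nxt u v = y" using y by auto
  then show ?thesis using y by auto
qed

end

fun sq :: "('a \<Rightarrow> 'a \<Rightarrow> 'a) \<Rightarrow> 'a \<Rightarrow> 'a \<Rightarrow> nat \<Rightarrow> 'a" where
  "sq f a b 0 = a"
| "sq f a b (Suc 0) = b"
| "sq f a b (Suc (Suc k)) = f (sq f a b k) (sq f a b (Suc k))"

locale G3 = G2 +
  fixes a0 b0
  assumes b0V: "b0 \<in> V" and a0m: "a0 \<in> mid b0"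
begin

abbreviation "s \<equiv> sq nxt a0 b0"

lemma s_step: "s (k+2) = nxt (s k) (s (k+1))"
proof -
  have "k + 2 = Suc (Suc k)" "k + 1 = Suc k" by simp_all
  then show ?thesis by simp
qed

declare sq.simps(3)[simp del]

lemma s_inv: "s k \<in> V \<and> s (k+1) \<in> V \<and> s k \<in> mid (s (k+1))"
proof (induction k)
  case 0
  have "E b0 a0" using mid_N[OF a0m] .
  then show ?case using b0V a0m EV by simp
next
  case (Suc k)
  then have p: "mid (s (k+1)) = {s k, s (k+2)} \<and> s k \<noteq> s (k+2)"
    using nxt_prop s_step by simp
  then have "s (k+2) \<in> mid (s (k+1))" by blast
  then have "s (k+1) \<in> mid (s (k+2))" "E (s (k+1)) (s (k+2))" using mid_sym mid_N by blast+
  then show ?case using EV by simp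
qed

lemma sV: "s k \<in> V" using s_inv by blast

lemma F1: "mid (s (k+1)) = {s k, s (k+2)} \<and> s k \<noteq> s (k+2)"
  using nxt_prop s_step s_inv by simp

lemma F3a: "E (s k) (s (k+1))"
  using s_inv mid_N Esym by blast

lemma F3b: "E (s k) (s (k+2))"
proof -
  have "s (k+1) \<in> V" using sV .
  then show ?thesis using mid_adj F1[of k] by blast
qed

lemma H:
  assumes l: "lp (s (k+2)) q1 q2 q3 q4" and q2: "q2 = s (k+1)" and q3: "q3 = s (k+3)"
  shows "q1 = s k \<and> q4 = s (k+4)"
proof -
  have d: "distinct [q1,q2,q3,q4]" and Nu: "N (s (k+2)) = {q1,q2,q3,q4}" and e: "E q1 q2" "E q2 q3" "E q3 q4" "\<not> E q1 q3" "\<not> E q2 q4"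
    using l unfolding lp_def by auto
  have m2: "mid (s (k+2)) = {s (k+1), s (k+3)}" "s (k+1) \<noteq> s (k+3)"
    using F1[of "k+1"] by (simp_all add: eval_nat_numeral)
  have m3: "mid (s (k+3)) = {s (k+2), s (k+4)}" using F1[of "k+2"] by (simp add: eval_nat_numeral)
  have m1: "mid (s (k+1)) = {s k, s (k+2)}" using F1[of k] by simp
  have sV2: "s (k+2) \<in> V" using sV .
  have e24: "E (s (k+2)) (s (k+4))" using F3b[of "k+2"] by (simp add: eval_nat_numeral)
  have e34: "E (s (k+3)) (s (k+4))" using F3a[of "k+3"] by (simp add: eval_nat_numeral)
  have "s (k+4) \<in> {q1,q2,q3,q4}" using e24 Nu N_iff by blast
  moreover have "s (k+4) \<noteq> q1" using e34 e(4) q3 Esym by blast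
  moreover have "s (k+4) \<noteq> q3" using e34 q3 Eirr by metis
  moreover have "s (k+4) \<noteq> q2"
  proof
    assume "s (k+4) = q2"
    then have "s (k+1) \<in> mid (s (k+3))" using m3 q2 by auto
    then show False using NT[OF sV2, of "s (k+1)" "s (k+3)"] m2 by auto
  qed
  ultimately have r4: "q4 = s (k+4)" by blast
  have e02: "E (s (k+2)) (s k)" using F3b[of k] Esym by blast
  have e01: "E (s (k+1)) (s k)" using F3a[of k] Esym by blast
  have "s k \<in> {q1,q2,q3,q4}" using e02 Nu N_iff by blast
  moreover have "s k \<noteq> q4" using e01 e(5) q2 by blast
  moreover have "s k \<noteq> q2" using e01 q2 Eirr by metis
  moreover have "s k \<noteq> q3"
  proof
    assume "s k = q3"
    then have "s (k+3) \<in> mid (s (k+1))" using m1 q3 by auto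
    then show False using NT[OF sV2, of "s (k+3)" "s (k+1)"] m2 by auto
  qed
  ultimately have "q1 = s k" by blast
  then show ?thesis using r4 by blast
qed

lemma lp_s: "lp (s (k+2)) (s k) (s (k+1)) (s (k+3)) (s (k+4))"
proof -
  obtain p1 p2 p3 p4 where l: "lp (s (k+2)) p1 p2 p3 p4" "\<not> E p1 p4" using link2 sV by blast
  have m: "mid (s (k+2)) = {p2,p3}" "p2 \<noteq> p3" using M1[OF l] l(1) unfolding lp_def by auto
  have m2: "mid (s (k+2)) = {s (k+1), s (k+3)}"
    using F1[of "k+1"] by (simp add: eval_nat_numeral)
  have "(p2 = s (k+1) \<and> p3 = s (k+3)) \<or> (p2 = s (k+3) \<and> p3 = s (k+1))"
    using m m2 by (auto simp: doubleton_eq_iff)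
  then show ?thesis
  proof
    assume a: "p2 = s (k+1) \<and> p3 = s (k+3)"
    then show ?thesis using H[OF l(1)] l(1) by auto
  next
    assume a: "p2 = s (k+3) \<and> p3 = s (k+1)"
    have l': "lp (s (k+2)) p4 p3 p2 p1" using lp_rev[OF l(1)] .
    then show ?thesis using H[OF l'] a by auto
  qed
qed


lemma det_f:
  assumes "s i = s j" "s (i+1) = s (j+1)" shows "s (i+2) = s (j+2)"
proof -
  have "{s i, s (i+2)} = {s j, s (j+2)}" "s i \<noteq> s (i+2)" using F1[of i] F1[of j] assms(2) by metis+
  then have "s (i+2) \<in> {s j, s (j+2)}" "s (i+2) \<noteq> s j" using assms(1) by (blast, metis)
  then show ?thesis by blast
qed

lemma det_b:
  assumes "s (i+1) = s (j+1)" "s (i+2) = s (j+2)" shows "s i = s j"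
proof -
  have "{s i, s (i+2)} = {s j, s (j+2)}" "s i \<noteq> s (i+2)" using F1[of i] F1[of j] assms(1) by metis+
  then have "s i \<in> {s j, s (j+2)}" "s i \<noteq> s (j+2)" using assms(2) by (blast, metis)
  then show ?thesis by blast
qed

lemma back0:
  "i \<le> j \<Longrightarrow> s i = s j \<Longrightarrow> s (i+1) = s (j+1) \<Longrightarrow> s 0 = s (j - i) \<and> s 1 = s (j - i + 1)"
proof (induction i arbitrary: j)
  case 0 then show ?case by simp
next
  case (Suc i)
  then obtain j' where j: "j = Suc j'" by (cases j) auto
  have a: "s (i+1) = s (j'+1)" "s (i+2) = s (j'+2)" using Suc.prems j by (simp_all add: eval_nat_numeral)
  have "s i = s j'" using det_b[OF a] .
  then have "s 0 = s (j' - i) \<and> s 1 = s (j' - i + 1)" using Suc.IH[of j'] Suc.prems(1) a(1) j by simp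
  then show ?case using j by simp
qed

lemma per_from:
  assumes "s 0 = s d" "s 1 = s (d+1)"
  shows "s (k + d) = s k \<and> s (k + 1 + d) = s (k+1)"
proof (induction k)
  case 0 then show ?case using assms by simp
next
  case (Suc k)
  have "s (k + d + 2) = s (k + 2)" using det_f[of "k+d" k] Suc.IH by (simp add: ac_simps)
  then show ?case using Suc.IH by (simp add: ac_simps eval_nat_numeral)
qed

lemma ex_per: "\<exists>d>0. \<forall>k. s (k+d) = s k"
proof -
  let ?f = "\<lambda>k. (s k, s (k+1))"
  have "range ?f \<subseteq> V \<times> V" using sV by auto
  then have "finite (range ?f)" using finV by (meson finite_SigmaI finite_subset)
  then have "\<not> inj ?f" using finite_imageD infinite_UNIV_nat by blast
  then obtain i j where ij: "i \<noteq> j" "?f i = ?f j" unfolding inj_def by blast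
  have "\<exists>i j. i < j \<and> s i = s j \<and> s (i+1) = s (j+1)"
  proof (cases "i < j")
    case True then show ?thesis using ij by auto
  next
    case False then have "j < i" using ij by auto
    then show ?thesis using ij by (intro exI[of _ j] exI[of _ i]) auto
  qed
  then obtain i j where "i < j" "s i = s j" "s (i+1) = s (j+1)" by blast
  then have "s 0 = s (j - i) \<and> s 1 = s (j - i + 1)" using back0 by simp
  then have "\<forall>k. s (k + (j - i)) = s k" using per_from by blast
  then show ?thesis using \<open>i < j\<close> by (intro exI[of _ "j - i"]) auto
qed

definition P where "P = (LEAST d. 0 < d \<and> (\<forall>k. s (k+d) = s k))"

lemma P_prop: "0 < P \<and> (\<forall>k. s (k+P) = s k)"
  unfolding P_def using LeastI_ex[OF ex_per] .

lemma P_pos: "0 < P" using P_prop by blast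
lemma sP: "s (k + P) = s k" using P_prop by blast

lemma P_min: "0 < d \<Longrightarrow> d < P \<Longrightarrow> \<exists>k. s (k+d) \<noteq> s k"
  using not_less_Least[of d "\<lambda>d. 0 < d \<and> (\<forall>k. s (k+d) = s k)"] unfolding P_def by blast

lemma s_mult: "s (k + q*P) = s k"
proof (induction q)
  case 0 then show ?case by simp
next
  case (Suc q)
  have "s (k + Suc q * P) = s ((k + q*P) + P)" by (simp add: ac_simps)
  also have "\<dots> = s k" using sP Suc.IH by simp
  finally show ?case .
qed

lemma s_mod: "s k = s (k mod P)"
proof -
  have "k = k mod P + (k div P) * P" by simp
  then show ?thesis using s_mult[of "k mod P" "k div P"] by metis
qed


lemma inj_lt:
  assumes ij: "i < j" "j < P" shows "s i \<noteq> s j"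
proof
  assume eq: "s i = s j"
  show False
  proof (cases "s (i+1) = s (j+1)")
    case True
    then have "s 0 = s (j - i) \<and> s 1 = s (j - i + 1)" using back0 eq ij by simp
    then have al: "\<forall>k. s (k + (j - i)) = s k" using per_from by blast
    have "0 < j - i" "j - i < P" using ij by auto
    then obtain k where "s (k + (j-i)) \<noteq> s k" using P_min by blast
    then show False using al by blast
  next
    case False
    define M where "M = i + P"
    have M1: "M - 1 + 1 = M" "M - 1 + 2 = i + 1 + P" using P_pos unfolding M_def by auto
    have sM: "s M = s i" unfolding M_def using sP .
    have sM1: "s (i + 1 + P) = s (i+1)" using sP .
    have mi: "mid (s i) = {s (M - 1), s (i+1)}" using F1[of "M - 1"] M1 sM sM1 by simp
    have j1: "j - 1 + 1 = j" "j - 1 + 2 = j + 1" using ij by auto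
    have mj: "mid (s j) = {s (j - 1), s (j+1)}" using F1[of "j - 1"] j1 by simp
    have "s (j+1) \<in> mid (s i)" using mj eq by simp
    then have sj1: "s (j+1) = s (M - 1)" using mi False by auto
    have refl: "m + 1 \<le> M \<longrightarrow> s (j+m) = s (M - m) \<and> s (j+m+1) = s (M - m - 1)" for m
    proof (induction m)
      case 0 then show ?case using sM eq sj1 by simp
    next
      case (Suc m)
      show ?case
      proof
        assume a: "Suc m + 1 \<le> M"
        then have ih: "s (j+m) = s (M - m)" "s (j+m+1) = s (M - m - 1)" using Suc.IH by auto
        define t where "t = M - m - 2"
        have t: "t + 1 = M - m - 1" "t + 2 = M - m" using a unfolding t_def by auto
        have f1: "mid (s (j+m+1)) = {s (j+m), s (j+m+2)}" "s (j+m) \<noteq> s (j+m+2)"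
          using F1[of "j+m"] by (simp_all add: ac_simps)
        have f2: "mid (s (t+1)) = {s t, s (t+2)}" using F1[of t] by simp
        have "{s (j+m), s (j+m+2)} = {s t, s (j+m)}" using f1 f2 t ih by (simp add: insert_commute)
        then have "s (j+m+2) = s t" using f1(2) by (auto simp: doubleton_eq_iff)
        then show "s (j + Suc m) = s (M - Suc m) \<and> s (j + Suc m + 1) = s (M - Suc m - 1)"
          using ih t unfolding t_def by (simp add: eval_nat_numeral)
      qed
    qed
    define D where "D = M - j"
    have D1: "1 \<le> D" "D \<le> M" "M = j + D" using ij unfolding D_def M_def by auto
    show False
    proof (cases "even D")
      case True
      then obtain m where m: "D = 2*m" by blast
      then have "m + 1 \<le> M" "1 \<le> m" using D1 by auto
      then have "s (j+m+1) = s (M - m - 1)" using refl by blast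
      moreover have "M - m - 1 = j + m - 1" using D1 m by simp
      moreover have "E (s (j+m-1)) (s (j+m-1+2))" using F3b .
      moreover have "j+m-1+2 = j+m+1" using \<open>1 \<le> m\<close> by simp
      ultimately show False using Eirr by metis
    next
      case False
      then obtain m where m: "D = 2*m+1" using oddE by blast
      then have "m + 1 \<le> M" using D1 by auto
      then have "s (j+m+1) = s (M - m - 1)" using refl by blast
      moreover have "M - m - 1 = j + m" using D1 m by simp
      moreover have "E (s (j+m)) (s (j+m+1))" using F3a .
      ultimately show False using Eirr by metis
    qed
  qed
qed

lemma s_eq_iff: "s a = s b \<longleftrightarrow> a mod P = b mod P"
proof
  assume "a mod P = b mod P"
  then show "s a = s b" using s_mod by metis
next
  assume e: "s a = s b"
  have "s (a mod P) = s (b mod P)" using e s_mod by metis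
  moreover have "a mod P < P" "b mod P < P" using P_pos by auto
  ultimately show "a mod P = b mod P" using inj_lt by (metis linorder_neqE_nat)
qed


lemma P6: "6 \<le> P"
proof (rule ccontr)
  assume a: "\<not> 6 \<le> P"
  have l: "lp (s 2) (s 0) (s 1) (s 3) (s 4)" using lp_s[of 0] by (simp only: add_0)
  have d: "distinct [s 0, s 1, s 3, s 4]" and Nu: "N (s 2) = {s 0, s 1, s 3, s 4}" using l unfolding lp_def by auto
  have "s 2 \<notin> N (s 2)" using Eirr N_iff by blast
  then have d2: "s 2 \<noteq> s 0" "s 2 \<noteq> s 1" "s 2 \<noteq> s 3" "s 2 \<noteq> s 4" using Nu by auto
  have n04: "\<not> E (s 0) (s 4)" using allP sV l by blast
  have e45: "E (s 4) (s 5)" using F3a[of 4] by (simp only: numeral_plus_one semiring_norm)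
  have sP0: "s P = s 0" using sP[of 0] by simp
  have "P = 1 \<or> P = 2 \<or> P = 3 \<or> P = 4 \<or> P = 5" using a P_pos by auto
  then show False
  proof (elim disjE)
    assume "P = 5" then show False using sP0 n04 e45 Esym by auto
  qed (use sP0 d d2 in auto)
qed

lemma N_s: "N (s a) = {s (a+(P-2)), s (a+(P-1)), s (a+(P+1)), s (a+(P+2))}"
proof -
  have l: "lp (s (a+P-2+2)) (s (a+P-2)) (s (a+P-2+1)) (s (a+P-2+3)) (s (a+P-2+4))" using lp_s .
  have e: "a+P-2+2 = a+P" "a+P-2 = a+(P-2)" "a+P-2+1 = a+(P-1)" "a+P-2+3 = a+(P+1)" "a+P-2+4 = a+(P+2)"
    using P6 by auto
  have "s (a+P) = s a" using sP .
  then show ?thesis using l e unfolding lp_def by metis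
qed

lemma K:
  assumes "q < P" shows "E (s a) (s (a+q)) \<longleftrightarrow> q \<in> {1, 2, P-2, P-1}"
proof -
  have eq: "s (a+q) = s (a+t) \<longleftrightarrow> q = t mod P" for t
    using s_eq_iff mod_cancel assms by simp
  have t: "(P-2) mod P = P - 2" "(P-1) mod P = P - 1" "(P+1) mod P = 1" "(P+2) mod P = 2"
    using tvals[OF P6] .
  have "E (s a) (s (a+q)) \<longleftrightarrow> s (a+q) \<in> N (s a)" using N_iff by blast
  also have "\<dots> \<longleftrightarrow> s (a+q) = s (a+(P-2)) \<or> s (a+q) = s (a+(P-1)) \<or> s (a+q) = s (a+(P+1)) \<or> s (a+q) = s (a+(P+2))"
    unfolding N_s by blast
  also have "\<dots> \<longleftrightarrow> q = (P-2) mod P \<or> q = (P-1) mod P \<or> q = (P+1) mod P \<or> q = (P+2) mod P"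
    using eq[of "P-2"] eq[of "P-1"] eq[of "P+1"] eq[of "P+2"] by blast
  also have "\<dots> \<longleftrightarrow> q \<in> {1, 2, P-2, P-1}" unfolding t by auto
  finally show ?thesis .
qed

lemma edge:
  assumes "i \<in> {1..P}" "j \<in> {1..P}"
  shows "TC_adj P i j \<longleftrightarrow> E (s i) (s j)"
proof -
  define q where "q = (i + P - j) mod P"
  have qP: "q < P" unfolding q_def using P_pos by simp
  have "(j + q) mod P = (j + (i + P - j)) mod P" unfolding q_def by (simp add: mod_add_right_eq)
  also have "\<dots> = (i + P) mod P" using assms by simp
  also have "\<dots> = i mod P" by simp
  finally have "s (j + q) = s i" using s_eq_iff by simp
  then have "E (s i) (s j) \<longleftrightarrow> q \<in> {1, 2, P-2, P-1}" using K[OF qP, of j] Esym by metis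
  moreover have "TC_adj P i j \<longleftrightarrow> i \<noteq> j \<and> q \<in> {P-2, P-1, 1, 2}"
    unfolding q_def using tc_nat[OF P6] assms by simp
  moreover have "i = j \<Longrightarrow> q = 0" unfolding q_def by simp
  moreover have "1 \<le> P - 2" using P6 by simp
  ultimately show ?thesis by auto
qed

lemma s_in: "s k \<in> s ` {1..P}"
proof (cases "k mod P = 0")
  case True
  then have "s k = s P" using s_eq_iff by simp
  then show ?thesis using P_pos by auto
next
  case False
  then have "k mod P \<in> {1..P}" using P_pos by (simp add: order_less_imp_le)
  then show ?thesis using s_mod by blast
qed

lemma s_surj: "s ` {1..P} = V"
proof
  show "s ` {1..P} \<subseteq> V" using sV by auto
  show "V \<subseteq> s ` {1..P}"
  proof
    fix u assume u: "u \<in> V"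
    have cl: "\<forall>y\<in>s ` {1..P}. N y \<subseteq> s ` {1..P}"
    proof
      fix y assume "y \<in> s ` {1..P}"
      then obtain a where "y = s a" by blast
      then show "N y \<subseteq> s ` {1..P}" using N_s s_in by auto
    qed
    show "u \<in> s ` {1..P}" using closure[OF s_in[of 1] cl u sV] .
  qed
qed

lemma s_inj: "inj_on s {1..P}"
proof
  fix a b assume ab: "a \<in> {1..P}" "b \<in> {1..P}" "s a = s b"
  then have m: "a mod P = b mod P" using s_eq_iff by blast
  show "a = b"
  proof (cases "a = P")
    case True
    then have "b mod P = 0" using m by simp
    then show ?thesis using ab True by (metis atLeastAtMost_iff le_neq_implies_less mod_less not_one_le_zero)
  next
    case False
    then have am: "a mod P = a" using ab by simp
    show ?thesis
    proof (cases "b = P")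
      case True
      then have "a = 0" using am m by simp
      then show ?thesis using ab by simp
    next
      case False
      then have "b mod P = b" using ab by simp
      then show ?thesis using am m by simp
    qed
  qed
qed

lemma result: "\<exists>n\<ge>6. graph_iso V E {1..n} (TC_adj n)"
proof -
  have "bij_betw s {1..P} V" using s_inj s_surj unfolding bij_betw_def by blast
  then have "graph_iso V E {1..P} (TC_adj P)" using iso_from edge by blast
  then show ?thesis using P6 by blast
qed

end

theorem lemmaA19:
  fixes V :: "'a set" and E :: "'a \<Rightarrow> 'a \<Rightarrow> bool"
  assumes "finite_simple_graph V E"
    and "connected_graph V E"
    and "regular 4 V E"
    and "\<forall>v\<in>V. graph_iso (neighbours V E v) (induced_adj E (neighbours V E v)) {0..<4} C4_adj
             \<or> graph_iso (neighbours V E v) (induced_adj E (neighbours V E v)) {0..<4} P4_adj"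
  shows "\<exists>n\<ge>6. graph_iso V E {1..n} (TC_adj n)"
proof -
  interpret G V E using assms by (rule G.intro)
  obtain v0 where v0: "v0 \<in> V" using assms(2) unfolding connected_graph_def by blast
  show ?thesis
  proof (cases "\<exists>v\<in>V. \<exists>p1 p2 p3 p4. lp v p1 p2 p3 p4 \<and> E p1 p4")
    case True
    then obtain v p1 p2 p3 p4 where "v \<in> V" "lp v p1 p2 p3 p4" "E p1 p4" by blast
    then have "graph_iso V E {1..6} (TC_adj 6)" using octa by blast
    then show ?thesis by (intro exI[of _ 6]) simp
  next
    case False
    interpret G2 V E
      by (rule G2.intro, rule G_axioms, unfold_locales) (use False in blast)
    obtain p1 p2 p3 p4 where l: "lp v0 p1 p2 p3 p4" "\<not> E p1 p4" using link2[OF v0] by blast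
    have "p2 \<in> mid v0" using M1[OF l] by simp
    then interpret G3 V E p2 v0
      by (intro G3.intro G2_axioms, unfold_locales) (use v0 in auto)
    show ?thesis using result .
  qed
qed

end
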